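(* Let $T$ be a node-weighted MFQST with Steiner point cost $c>0$ on sources $z_1,\dots,z_n$ and sink $z_{BS}$, and suppose $T$ contains exactly $k$ Steiner points. Then $$k\le\frac1c\left(L_c(BST(Z))-\frac{1}{n+k+1}\sum_{i=1}^n|z_iz_{BS}|^2\right).$$
   Context: Let $Z=\{z_1,\dots,z_n\}\subset\mathbb{R}^2$ ($n\ge 1$) be a set of sources and $z_{BS}\in\mathbb{R}^2\setminus Z$ a sink; each source has supply $1$. A flow-dependent quadratic Steiner tree (FQST) consists of a finite set $S\subset\mathbb{R}^2$ of Steiner points and a tree $T$ with vertex set $Z\cup S\cup\{z_{BS}\}$ whose edges are directed towards $z_{BS}$. Every node other than the sink has exactly one out-edge, and the sink has none. Each edge $e$ carries a positive flow $f(e)$ such that: - at each source, the flow on its out-edge minus the total flow on its in-edges equals $1$; - at each Steiner point, the out-flow equals the total in-flow; - the sink receives total flow $n$. The cost is $L(T)=\sum_{e\in E(T)} f(e)|e|^2$. A node-weighted MFQST minimises $L_c(T)=L(T)+c|S|$ over all FQSTs. Beaded spanning tree $BST(Z)$: take a Euclidean minimum spanning tree on $Z\cup\{z_{BS}\}$, directed towards $z_{BS}$, with flows determined as for an FQST. On each edge $e$ with flow $f(e)$, insert the minimum number of equally spaced degree-two Steiner points along the segment so that every resulting edge has length at most $\sqrt{2c/f(e)}$. The resulting FQST is $BST(Z)$. *)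

theory Defs
  imports "HOL-Analysis.Analysis"
begin

type_synonym pt = "real^2"

text \<open>An FQST on sources Z and sink s: Steiner point set S, a parent map nxt
(the unique out-edge of each non-sink node v is (v, nxt v)), and a flow f
(f v is the flow on the out-edge of v).\<close>
definition is_fqst :: "pt set \<Rightarrow> pt \<Rightarrow> pt set \<Rightarrow> (pt \<Rightarrow> pt) \<Rightarrow> (pt \<Rightarrow> real) \<Rightarrow> bool" where
  "is_fqst Z s S nxt f \<longleftrightarrow>
     finite S \<and> S \<inter> (Z \<union> {s}) = {} \<and>
     (\<forall>v \<in> Z \<union> S. nxt v \<in> Z \<union> S \<union> {s}) \<and>
     (\<forall>v \<in> Z \<union> S. \<exists>j. (nxt ^^ j) v = s) \<and>
     (\<forall>v \<in> Z \<union> S. f v > 0) \<and>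
     (\<forall>v \<in> Z. f v - (\<Sum>u \<in> {u \<in> Z \<union> S. nxt u = v}. f u) = 1) \<and>
     (\<forall>v \<in> S. f v = (\<Sum>u \<in> {u \<in> Z \<union> S. nxt u = v}. f u)) \<and>
     (\<Sum>u \<in> {u \<in> Z \<union> S. nxt u = s}. f u) = real (card Z)"

definition fqst_cost :: "pt set \<Rightarrow> pt set \<Rightarrow> (pt \<Rightarrow> pt) \<Rightarrow> (pt \<Rightarrow> real) \<Rightarrow> real" where
  "fqst_cost Z S nxt f = (\<Sum>v \<in> Z \<union> S. f v * (dist v (nxt v))\<^sup>2)"

definition fqst_costc :: "real \<Rightarrow> pt set \<Rightarrow> pt set \<Rightarrow> (pt \<Rightarrow> pt) \<Rightarrow> (pt \<Rightarrow> real) \<Rightarrow> real" where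
  "fqst_costc c Z S nxt f = fqst_cost Z S nxt f + c * real (card S)"

definition is_mfqst :: "real \<Rightarrow> pt set \<Rightarrow> pt \<Rightarrow> pt set \<Rightarrow> (pt \<Rightarrow> pt) \<Rightarrow> (pt \<Rightarrow> real) \<Rightarrow> bool" where
  "is_mfqst c Z s S nxt f \<longleftrightarrow> is_fqst Z s S nxt f \<and>
     (\<forall>S' nxt' f'. is_fqst Z s S' nxt' f' \<longrightarrow> fqst_costc c Z S nxt f \<le> fqst_costc c Z S' nxt' f')"

definition is_sptree :: "pt set \<Rightarrow> pt \<Rightarrow> (pt \<Rightarrow> pt) \<Rightarrow> bool" where
  "is_sptree Z s nxt \<longleftrightarrow> (\<forall>v \<in> Z. nxt v \<in> Z \<union> {s}) \<and> (\<forall>v \<in> Z. \<exists>j. (nxt ^^ j) v = s)"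

definition tree_length :: "pt set \<Rightarrow> (pt \<Rightarrow> pt) \<Rightarrow> real" where
  "tree_length Z nxt = (\<Sum>v \<in> Z. dist v (nxt v))"

definition is_emst :: "pt set \<Rightarrow> pt \<Rightarrow> (pt \<Rightarrow> pt) \<Rightarrow> bool" where
  "is_emst Z s nxt \<longleftrightarrow> is_sptree Z s nxt \<and>
     (\<forall>nxt'. is_sptree Z s nxt' \<longrightarrow> tree_length Z nxt \<le> tree_length Z nxt')"

definition num_beads :: "real \<Rightarrow> real \<Rightarrow> real \<Rightarrow> nat" where
  "num_beads c fl len = (LEAST m::nat. len / real (m + 1) \<le> sqrt (2 * c / fl))"

text \<open>L_c(BST(Z)) for the EMST nxt with flows f: each MST edge (v, nxt v) is
subdivided into m+1 sub-edges of length |e|/(m+1), each carrying flow f v, and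
contributes m Steiner points.\<close>
definition bst_costc :: "real \<Rightarrow> pt set \<Rightarrow> (pt \<Rightarrow> pt) \<Rightarrow> (pt \<Rightarrow> real) \<Rightarrow> real" where
  "bst_costc c Z nxt f =
     (\<Sum>v \<in> Z. let m = num_beads c (f v) (dist v (nxt v)) in
        real (m + 1) * (f v * (dist v (nxt v) / real (m + 1))\<^sup>2) + c * real m)"

end

theory Submission
  imports Defs
begin

definition dep :: "(pt \<Rightarrow> pt) \<Rightarrow> pt \<Rightarrow> pt \<Rightarrow> nat" where
  "dep nxt s u = (LEAST j. (nxt ^^ j) u = s)"

lemma fix_iter: "nxt s = s \<Longrightarrow> (nxt ^^ i) s = s"
  by (induction i) auto

lemma dep_char:
  assumes ns: "nxt s = s" and r: "\<exists>j. (nxt ^^ j) u = s"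
  shows "(nxt ^^ i) u = s \<longleftrightarrow> dep nxt s u \<le> i"
proof
  assume "(nxt ^^ i) u = s" thus "dep nxt s u \<le> i" unfolding dep_def by (rule Least_le)
next
  assume le: "dep nxt s u \<le> i"
  have d: "(nxt ^^ dep nxt s u) u = s" unfolding dep_def using r by (rule LeastI_ex)
  have "(nxt ^^ i) u = (nxt ^^ ((i - dep nxt s u) + dep nxt s u)) u" using le by simp
  also have "\<dots> = (nxt ^^ (i - dep nxt s u)) ((nxt ^^ dep nxt s u) u)" by (simp add: funpow_add)
  also have "\<dots> = s" using d fix_iter[of nxt s, OF ns] by simp
  finally show "(nxt ^^ i) u = s" .
qed

lemma dep_iter:
  assumes ns: "nxt s = s" and r: "\<exists>j. (nxt ^^ j) u = s"
  shows "dep nxt s ((nxt ^^ i) u) = dep nxt s u - i"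
proof -
  have eq: "(nxt ^^ k) ((nxt ^^ i) u) = s \<longleftrightarrow> dep nxt s u - i \<le> k" for k
  proof -
    have "(nxt ^^ k) ((nxt ^^ i) u) = (nxt ^^ (k + i)) u" by (simp add: funpow_add)
    thus ?thesis using dep_char[of nxt s, OF ns r, of "k+i"] by auto
  qed
  have "dep nxt s ((nxt ^^ i) u) = (LEAST k. (nxt ^^ k) ((nxt ^^ i) u) = s)" by (simp add: dep_def)
  also have "\<dots> = dep nxt s u - i" by (rule Least_equality) (simp_all add: eq)
  finally show ?thesis .
qed

lemma dep_nxt:
  assumes ns: "nxt s = s" and r: "\<exists>j. (nxt ^^ j) u = s"
  shows "dep nxt s (nxt u) = dep nxt s u - 1"
  using dep_iter[of nxt s, OF ns r, of 1] by simp

lemma dep_pos: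
  assumes ns: "nxt s = s" and r: "\<exists>j. (nxt ^^ j) u = s" and "u \<noteq> s"
  shows "dep nxt s u \<ge> 1"
  using dep_char[of nxt s, OF ns r, of 0] assms(3) by auto

lemma tri_iter:
  fixes g :: "pt \<Rightarrow> pt"
  shows "dist x ((g ^^ n) x) \<le> (\<Sum>j<n. dist ((g ^^ j) x) (g ((g ^^ j) x)))"
proof (induction n)
  case 0 then show ?case by simp
next
  case (Suc n)
  have "dist x ((g ^^ Suc n) x) \<le> dist x ((g ^^ n) x) + dist ((g ^^ n) x) (g ((g ^^ n) x))"
    by (simp add: dist_triangle)
  with Suc show ?case by simp
qed

lemma lower:
  assumes fq: "is_fqst Z s S nxt f" and ns: "nxt s = s" and fin: "finite Z" and sZ: "s \<notin> Z"
  shows "(\<Sum>z\<in>Z. (dist z s)\<^sup>2) \<le> real (card (Z \<union> S)) * fqst_cost Z S nxt f"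
proof -
  define V where "V = Z \<union> S"
  from fq have finS: "finite S" and disj: "S \<inter> (Z \<union> {s}) = {}"
    and cl1: "\<forall>v \<in> V. nxt v \<in> V \<union> {s}"
    and reach: "\<forall>v \<in> V. \<exists>j. (nxt ^^ j) v = s"
    and srcc: "\<forall>v \<in> Z. f v - (\<Sum>u \<in> {u \<in> V. nxt u = v}. f u) = 1"
    and stc: "\<forall>v \<in> S. f v = (\<Sum>u \<in> {u \<in> V. nxt u = v}. f u)"
    unfolding is_fqst_def V_def by auto
  have finV: "finite V" using fin finS V_def by auto
  have sV: "s \<notin> V" using sZ disj V_def by auto
  have cl: "(nxt ^^ i) u \<in> V \<union> {s}" if "u \<in> V \<union> {s}" for u i
    using that by (induction i) (use cl1 ns in auto)
  define d where "d = dep nxt s"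
  define A where "A v = {z\<in>Z. \<exists>j. (nxt ^^ j) z = v}" for v
  define C where "C v = {u\<in>V. nxt u = v}" for v
  have rch: "\<exists>j. (nxt ^^ j) u = s" if "u \<in> V" for u using reach that by blast
  have dpos: "d u \<ge> 1" if "u \<in> V" for u
  proof -
    have "u \<noteq> s" using that sV by blast
    thus ?thesis unfolding d_def by (rule dep_pos[of nxt s, OF ns rch[OF that]])
  qed
  have dch: "d u = d v + 1" if "u \<in> C v" for u v
  proof -
    have "u \<in> V" "nxt u = v" using that C_def by auto
    have "d (nxt u) = d u - 1" unfolding d_def by (rule dep_nxt[of nxt s, OF ns rch[OF \<open>u \<in> V\<close>]])
    thus ?thesis using \<open>nxt u = v\<close> dpos[OF \<open>u \<in> V\<close>] by simp
  qed
  have diter: "d ((nxt ^^ i) u) = d u - i" if "u \<in> V" for u i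
    unfolding d_def by (rule dep_iter[of nxt s, OF ns rch[OF that]])
  have dch2: "(nxt ^^ i) u = s \<longleftrightarrow> d u \<le> i" if "u \<in> V" for u i
    unfolding d_def by (rule dep_char[of nxt s, OF ns rch[OF that]])
  have jlt: "j < d z" if "z \<in> V" "(nxt ^^ j) z = v" "v \<in> V" for z j v
    using dch2[OF that(1), of j] that sV by auto
  define M where "M = Max (d ` V)"
  have dM: "d u \<le> M" if "u \<in> V" for u unfolding M_def using finV that by simp
  have finA: "finite (A v)" for v unfolding A_def using fin by simp
  have finC: "finite (C v)" for v unfolding C_def using finV by simp
  have key: "\<forall>v\<in>V. M - d v = n \<longrightarrow> f v = card (A v)" for n
  proof (induction n rule: less_induct)
    case (less n)
    show ?case
    proof (intro ballI impI)
      fix v assume vV: "v \<in> V" and hn: "M - d v = n"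
      have IH: "f u = card (A u)" if "u \<in> C v" for u
      proof -
        have uV: "u \<in> V" using that C_def by auto
        have "d u = d v + 1" using dch[OF that] .
        hence "M - d u < n" using dM[OF uV] hn by linarith
        thus ?thesis using less uV by blast
      qed
      have Aeq: "A v = (Z \<inter> {v}) \<union> (\<Union>u\<in>C v. A u)"
      proof (intro equalityI subsetI)
        fix z assume "z \<in> A v"
        then obtain j where zZ: "z \<in> Z" and j: "(nxt ^^ j) z = v" unfolding A_def by auto
        show "z \<in> (Z \<inter> {v}) \<union> (\<Union>u\<in>C v. A u)"
        proof (cases j)
          case 0 then show ?thesis using zZ j by simp
        next
          case (Suc i)
          define u where "u = (nxt ^^ i) z"
          have "nxt u = v" using j Suc u_def by simp
          moreover have "u \<in> V \<union> {s}" using cl zZ u_def V_def by auto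
          moreover have "u \<noteq> s" using \<open>nxt u = v\<close> ns vV sV by auto
          ultimately have "u \<in> C v" unfolding C_def by auto
          moreover have "z \<in> A u" unfolding A_def using zZ u_def by auto
          ultimately show ?thesis by blast
        qed
      next
        fix z assume "z \<in> (Z \<inter> {v}) \<union> (\<Union>u\<in>C v. A u)"
        then show "z \<in> A v"
        proof
          assume "z \<in> Z \<inter> {v}" then show ?thesis unfolding A_def by (auto intro: exI[of _ 0])
        next
          assume "z \<in> (\<Union>u\<in>C v. A u)"
          then obtain u j where "u \<in> C v" "z \<in> Z" "(nxt ^^ j) z = u" unfolding A_def by auto
          hence "(nxt ^^ Suc j) z = v" unfolding C_def by simp
          thus ?thesis unfolding A_def using \<open>z \<in> Z\<close> by blast
        qed
      qed
      have disj1: "(Z \<inter> {v}) \<inter> (\<Union>u\<in>C v. A u) = {}"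
      proof (rule ccontr)
        assume "(Z \<inter> {v}) \<inter> (\<Union>u\<in>C v. A u) \<noteq> {}"
        then obtain u j where uC: "u \<in> C v" and "v \<in> Z" "(nxt ^^ j) v = u" unfolding A_def by auto
        hence "d u = d v - j" using diter vV by blast
        moreover have "d u = d v + 1" using dch[OF uC] .
        ultimately show False by linarith
      qed
      have disj2: "A u \<inter> A u' = {}" if "u \<in> C v" "u' \<in> C v" "u \<noteq> u'" for u u'
      proof (rule ccontr)
        assume "A u \<inter> A u' \<noteq> {}"
        then obtain z j j' where zZ: "z \<in> Z" and j: "(nxt ^^ j) z = u" and j': "(nxt ^^ j') z = u'"
          unfolding A_def by auto
        have uV: "u \<in> V" "u' \<in> V" using that C_def by auto
        have zV: "z \<in> V" using zZ V_def by auto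
        have "d u = d z - j" "d u' = d z - j'" using diter[OF zV] j j' by auto
        moreover have "j < d z" "j' < d z" using jlt[OF zV] j j' uV by auto
        moreover have "d u = d u'" using dch that by auto
        ultimately have "j = j'" by linarith
        thus False using j j' that by simp
      qed
      have cardA: "card (A v) = card (Z \<inter> {v}) + (\<Sum>u\<in>C v. card (A u))"
      proof -
        have "card (A v) = card (Z \<inter> {v}) + card (\<Union>u\<in>C v. A u)"
          unfolding Aeq by (rule card_Un_disjoint) (use finC finA disj1 in auto)
        also have "card (\<Union>u\<in>C v. A u) = (\<Sum>u\<in>C v. card (A u))"
          by (rule card_UN_disjoint) (use finC finA disj2 in auto)
        finally show ?thesis .
      qed
      have fv: "f v = (if v \<in> Z then 1 else 0) + (\<Sum>u\<in>C v. f u)"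
        using srcc stc vV V_def C_def by (auto simp: algebra_simps)
      have "(\<Sum>u\<in>C v. f u) = (\<Sum>u\<in>C v. real (card (A u)))"
        by (rule sum.cong) (use IH in auto)
      thus "f v = real (card (A v))" using fv cardA by auto
    qed
  qed
  have fA: "f v = card (A v)" if "v \<in> V" for v using key that by blast
  define a where "a v = (dist v (nxt v))\<^sup>2" for v
  define R where "R z v = (\<exists>j. (nxt ^^ j) z = v)" for z v
  have cost: "fqst_cost Z S nxt f = (\<Sum>z\<in>Z. \<Sum>v\<in>{v\<in>V. R z v}. a v)"
  proof -
    have "fqst_cost Z S nxt f = (\<Sum>v\<in>V. f v * a v)" unfolding fqst_cost_def V_def a_def by simp
    also have "\<dots> = (\<Sum>v\<in>V. \<Sum>z\<in>{z\<in>Z. R z v}. a v)"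
      by (rule sum.cong) (use fA in \<open>auto simp: A_def R_def\<close>)
    also have "\<dots> = (\<Sum>z\<in>Z. \<Sum>v\<in>{v\<in>V. R z v}. a v)"
      by (rule sum.swap_restrict) (use finV fin in auto)
    finally show ?thesis .
  qed
  have perz: "(dist z s)\<^sup>2 \<le> real (card V) * (\<Sum>v\<in>{v\<in>V. R z v}. a v)" if zZ: "z \<in> Z" for z
  proof -
    have zV: "z \<in> V" using zZ V_def by auto
    define P where "P = {v\<in>V. R z v}"
    have Peq: "P = (\<lambda>j. (nxt ^^ j) z) ` {..<d z}"
    proof (intro equalityI subsetI)
      fix v assume "v \<in> P"
      then obtain j where "v \<in> V" "(nxt ^^ j) z = v" unfolding P_def R_def by auto
      thus "v \<in> (\<lambda>j. (nxt ^^ j) z) ` {..<d z}" using jlt[OF zV] by auto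
    next
      fix v assume "v \<in> (\<lambda>j. (nxt ^^ j) z) ` {..<d z}"
      then obtain j where j: "j < d z" "v = (nxt ^^ j) z" by auto
      have "v \<in> V \<union> {s}" using cl zV j by auto
      moreover have "v \<noteq> s" using dch2[OF zV, of j] j by auto
      ultimately show "v \<in> P" unfolding P_def R_def using j by auto
    qed
    have inj: "inj_on (\<lambda>j. (nxt ^^ j) z) {..<d z}"
    proof
      fix i j assume "i \<in> {..<d z}" "j \<in> {..<d z}" "(nxt ^^ i) z = (nxt ^^ j) z"
      moreover have "d ((nxt ^^ i) z) = d z - i" "d ((nxt ^^ j) z) = d z - j" using diter zV by auto
      ultimately show "i = j" by auto
    qed
    have cardP: "card P = d z" unfolding Peq using card_image[OF inj] by simp
    have PV: "P \<subseteq> V" unfolding P_def by auto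
    have "card P \<le> card V" by (rule card_mono[OF finV PV])
    hence "d z \<le> card V" by (simp only: cardP)
    define b where "b j = dist ((nxt ^^ j) z) (nxt ((nxt ^^ j) z))" for j
    have sumP: "(\<Sum>v\<in>P. a v) = (\<Sum>j<d z. (b j)\<^sup>2)"
      unfolding Peq sum.reindex[OF inj] by (simp add: a_def b_def)
    have "dist z s \<le> (\<Sum>j<d z. b j)"
      using tri_iter[of z "d z" nxt] dch2[OF zV, of "d z"] unfolding b_def by simp
    hence "(dist z s)\<^sup>2 \<le> (\<Sum>j<d z. b j)\<^sup>2" by (simp add: power_mono)
    also have "\<dots> \<le> (\<Sum>j<d z. (b j)\<^sup>2) * card {..<d z}" by (rule sum_squared_le_sum_of_squares)
    also have "\<dots> = (\<Sum>v\<in>P. a v) * d z" using sumP by simp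
    also have "\<dots> \<le> (\<Sum>v\<in>P. a v) * card V"
      using \<open>d z \<le> card V\<close> by (intro mult_left_mono) (auto simp: a_def intro: sum_nonneg)
    finally show ?thesis unfolding P_def by (simp add: mult.commute)
  qed
  have "(\<Sum>z\<in>Z. (dist z s)\<^sup>2) \<le> (\<Sum>z\<in>Z. real (card V) * (\<Sum>v\<in>{v\<in>V. R z v}. a v))"
    by (rule sum_mono) (rule perz)
  also have "\<dots> = real (card V) * fqst_cost Z S nxt f" unfolding cost by (simp add: sum_distrib_left)
  finally show ?thesis unfolding V_def .
qed


lemma fix_sink:
  assumes fq: "is_fqst Z s S nxt f" and sZ: "s \<notin> Z"
  shows "is_fqst Z s S (nxt(s := s)) f" and "fqst_cost Z S (nxt(s := s)) f = fqst_cost Z S nxt f"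
proof -
  define nxt0 where "nxt0 = nxt(s := s)"
  from fq have disj: "S \<inter> (Z \<union> {s}) = {}" and reach: "\<forall>v \<in> Z \<union> S. \<exists>j. (nxt ^^ j) v = s"
    and cl1: "\<forall>v \<in> Z \<union> S. nxt v \<in> Z \<union> S \<union> {s}"
    unfolding is_fqst_def by auto
  have sV: "s \<notin> Z \<union> S" using sZ disj by auto
  have eq: "u \<in> Z \<union> S \<Longrightarrow> nxt0 u = nxt u" for u using sV unfolding nxt0_def by auto
  have ch: "{u \<in> Z \<union> S. nxt0 u = x} = {u \<in> Z \<union> S. nxt u = x}" for x using eq by auto
  have R: "\<forall>u. u \<in> Z \<union> S \<union> {s} \<longrightarrow> (nxt ^^ j) u = s \<longrightarrow> (\<exists>j'. (nxt0 ^^ j') u = s)" for j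
  proof (induction j)
    case 0 then show ?case by (auto intro: exI[of _ 0])
  next
    case (Suc j)
    show ?case
    proof (intro allI impI)
      fix u assume u: "u \<in> Z \<union> S \<union> {s}" and h: "(nxt ^^ Suc j) u = s"
      show "\<exists>j'. (nxt0 ^^ j') u = s"
      proof (cases "u = s")
        case True then show ?thesis by (auto intro: exI[of _ 0])
      next
        case False
        hence uV: "u \<in> Z \<union> S" using u by auto
        have "(nxt ^^ j) (nxt u) = s" using h by (simp add: funpow_Suc_right del: funpow.simps)
        then obtain j0 where "(nxt0 ^^ j0) (nxt u) = s" using Suc cl1 uV by blast
        hence "(nxt0 ^^ Suc j0) u = s" using eq[OF uV] by (simp add: funpow_Suc_right del: funpow.simps)
        thus ?thesis by blast
      qed
    qed
  qed
  have reach0: "\<forall>v\<in>Z \<union> S. \<exists>j. (nxt0 ^^ j) v = s"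
  proof
    fix v assume "v \<in> Z \<union> S"
    then obtain j where "(nxt ^^ j) v = s" using reach by blast
    thus "\<exists>j. (nxt0 ^^ j) v = s" using R[of j] \<open>v \<in> Z \<union> S\<close> by blast
  qed
  show "is_fqst Z s S nxt0 f"
    using fq reach0 unfolding is_fqst_def ch by (auto simp: eq)
  show "fqst_cost Z S nxt0 f = fqst_cost Z S nxt f"
    unfolding fqst_cost_def by (rule sum.cong) (auto simp: eq)
qed

lemma insert_bead:
  assumes fq: "is_fqst Z s S nxt f" and v: "v \<in> Z \<union> S" and p: "p \<notin> Z \<union> S \<union> {s}" and finZ: "finite Z" and sZ: "s \<notin> Z"
  shows "is_fqst Z s (insert p S) (nxt(v := p, p := nxt v)) (f(p := f v))"
    and "fqst_cost Z (insert p S) (nxt(v := p, p := nxt v)) (f(p := f v)) =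
         fqst_cost Z S nxt f - f v * (dist v (nxt v))\<^sup>2 + f v * (dist v p)\<^sup>2 + f v * (dist p (nxt v))\<^sup>2"
proof -
  define w where "w = nxt v"
  define nxt' where "nxt' = nxt(v := p, p := nxt v)"
  define f' where "f' = f(p := f v)"
  define V where "V = Z \<union> S"
  from fq have finS: "finite S" and disj: "S \<inter> (Z \<union> {s}) = {}"
    and cl1: "\<forall>u \<in> V. nxt u \<in> V \<union> {s}"
    and reach: "\<forall>u \<in> V. \<exists>j. (nxt ^^ j) u = s"
    and fpos: "\<forall>u \<in> V. f u > 0"
    and srcc: "\<forall>u \<in> Z. f u - (\<Sum>x \<in> {x \<in> V. nxt x = u}. f x) = 1"
    and stc: "\<forall>u \<in> S. f u = (\<Sum>x \<in> {x \<in> V. nxt x = u}. f x)"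
    and snk: "(\<Sum>x \<in> {x \<in> V. nxt x = s}. f x) = real (card Z)"
    unfolding is_fqst_def V_def by auto
  have vV: "v \<in> V" using v V_def by simp
  have pV: "p \<notin> V" "p \<noteq> s" using p V_def by auto
  have pv: "p \<noteq> v" using vV pV by auto
  have wV: "w \<in> V \<union> {s}" using cl1 vV w_def by auto
  have pw: "p \<noteq> w" using wV pV by auto
  have finV: "finite V" using finS finZ unfolding V_def by auto
  have n1: "nxt' p = w" "nxt' v = p" using pv unfolding nxt'_def w_def by auto
  have n2: "u \<noteq> v \<Longrightarrow> u \<noteq> p \<Longrightarrow> nxt' u = nxt u" for u unfolding nxt'_def by auto
  have f1: "f' p = f v" "u \<noteq> p \<Longrightarrow> f' u = f u" for u unfolding f'_def by auto
  have nV: "u \<in> V \<Longrightarrow> u \<noteq> v \<Longrightarrow> nxt' u = nxt u" for u using pV unfolding nxt'_def by auto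
  have fV: "u \<in> V \<Longrightarrow> f' u = f u" for u using pV unfolding f'_def by auto
  have sV: "s \<notin> V" using sZ disj V_def by auto
  have V': "Z \<union> insert p S = insert p V" unfolding V_def by auto
  have ch: "(\<Sum>u\<in>{u\<in>insert p V. nxt' u = x}. f' u) = (\<Sum>u\<in>{u\<in>V. nxt u = x}. f u)" if "x \<noteq> p" for x
  proof (cases "x = w")
    case True
    have seq: "{u\<in>insert p V. nxt' u = x} = insert p ({u\<in>V. nxt u = x} - {v})"
      using True pV pv pw that unfolding nxt'_def w_def by auto
    have vin: "v \<in> {u\<in>V. nxt u = x}" using True vV w_def by auto
    have "(\<Sum>u\<in>{u\<in>insert p V. nxt' u = x}. f' u) = f' p + (\<Sum>u\<in>{u\<in>V. nxt u = x} - {v}. f' u)"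
      unfolding seq by (rule sum.insert) (use finV pV in auto)
    also have "(\<Sum>u\<in>{u\<in>V. nxt u = x} - {v}. f' u) = (\<Sum>u\<in>{u\<in>V. nxt u = x} - {v}. f u)"
      by (rule sum.cong) (auto simp: fV)
    also have "f' p + \<dots> = (\<Sum>u\<in>{u\<in>V. nxt u = x}. f u)"
      using sum.remove[OF _ vin, of f] finV by (simp add: f1)
    finally show ?thesis .
  next
    case False
    have seq: "{u\<in>insert p V. nxt' u = x} = {u\<in>V. nxt u = x}"
      using False pV pv pw that unfolding nxt'_def w_def by auto
    show ?thesis unfolding seq by (rule sum.cong) (auto simp: fV)
  qed
  have chp: "{u\<in>insert p V. nxt' u = p} = {v}"
  proof -
    have "u \<in> V \<Longrightarrow> u \<noteq> v \<Longrightarrow> nxt u \<noteq> p" for u using cl1 pV by auto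
    thus ?thesis using vV pw pV pv unfolding nxt'_def w_def by auto
  qed
  have R: "\<forall>u. u \<in> V \<union> {s} \<longrightarrow> (nxt ^^ j) u = s \<longrightarrow> (\<exists>j'. (nxt' ^^ j') u = s)" for j
  proof (induction j)
    case 0 then show ?case by (auto intro: exI[of _ 0])
  next
    case (Suc j)
    show ?case
    proof (intro allI impI)
      fix u assume u: "u \<in> V \<union> {s}" and h: "(nxt ^^ Suc j) u = s"
      show "\<exists>j'. (nxt' ^^ j') u = s"
      proof (cases "u = s")
        case True then show ?thesis by (auto intro: exI[of _ 0])
      next
        case False
        hence uV: "u \<in> V" using u by auto
        have "(nxt ^^ j) (nxt u) = s" using h by (simp add: funpow_Suc_right del: funpow.simps)
        then obtain j0 where j0: "(nxt' ^^ j0) (nxt u) = s" using Suc cl1 uV by blast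
        show ?thesis
        proof (cases "u = v")
          case True
          have "(nxt' ^^ Suc (Suc j0)) u = s" using j0 True
            by (simp add: funpow_Suc_right n1 w_def del: funpow.simps)
          thus ?thesis by blast
        next
          case False
          have "(nxt' ^^ Suc j0) u = s" using j0
            by (simp add: funpow_Suc_right nV[OF uV False] del: funpow.simps)
          thus ?thesis by blast
        qed
      qed
    qed
  qed
  have reach': "\<exists>j. (nxt' ^^ j) u = s" if "u \<in> insert p V" for u
  proof (cases "u = p")
    case False
    then show ?thesis using R reach that by blast
  next
    case True
    obtain j where j: "(nxt ^^ j) v = s" using reach vV by blast
    have "j \<noteq> 0" using j vV sV by (cases j) auto
    then obtain i where "j = Suc i" by (cases j) auto
    hence "(nxt ^^ i) w = s" using j w_def by (simp add: funpow_Suc_right del: funpow.simps)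
    then obtain j0 where "(nxt' ^^ j0) w = s" using R wV by blast
    hence "(nxt' ^^ Suc j0) p = s" by (simp add: funpow_Suc_right n1 del: funpow.simps)
    thus ?thesis using True by blast
  qed
  have "is_fqst Z s (insert p S) nxt' f'"
    unfolding is_fqst_def V'
  proof (intro conjI ballI)
    show "finite (insert p S)" using finS by simp
    show "insert p S \<inter> (Z \<union> {s}) = {}" using disj p by auto
  next
    fix u assume "u \<in> insert p V"
    thus "nxt' u \<in> insert p V \<union> {s}" using cl1 wV by (cases "u = p"; cases "u = v") (auto simp: n1 nV)
  next
    fix u assume "u \<in> insert p V"
    thus "\<exists>j. (nxt' ^^ j) u = s" by (rule reach')
  next
    fix u assume "u \<in> insert p V"
    thus "f' u > 0" using fpos vV by (cases "u = p") (auto simp: f1 fV)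
  next
    fix u assume uZ: "u \<in> Z"
    hence "u \<noteq> p" using pV V_def by auto
    thus "f' u - (\<Sum>x \<in> {x \<in> insert p V. nxt' x = u}. f' x) = 1"
      using srcc uZ ch[of u] fV[of u] V_def by auto
  next
    fix u assume uS: "u \<in> insert p S"
    show "f' u = (\<Sum>x \<in> {x \<in> insert p V. nxt' x = u}. f' x)"
    proof (cases "u = p")
      case True then show ?thesis using chp pv by (simp add: f1)
    next
      case False then show ?thesis using uS stc ch[OF False] fV[of u] V_def by auto
    qed
  next
    show "(\<Sum>x \<in> {x \<in> insert p V. nxt' x = s}. f' x) = real (card Z)"
      using ch[of s] pV snk by simp
  qed
  thus "is_fqst Z s (insert p S) (nxt(v := p, p := nxt v)) (f(p := f v))"
    unfolding nxt'_def f'_def .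
  define g where "g u = f u * (dist u (nxt u))\<^sup>2" for u
  define g' where "g' u = f' u * (dist u (nxt' u))\<^sup>2" for u
  have "fqst_cost Z (insert p S) nxt' f' = g' p + (\<Sum>u\<in>V. g' u)"
    unfolding fqst_cost_def V' g'_def by (rule sum.insert) (use finV pV in auto)
  also have "(\<Sum>u\<in>V. g' u) = g' v + (\<Sum>u\<in>V - {v}. g' u)"
    using sum.remove[OF finV vV] by simp
  also have "(\<Sum>u\<in>V - {v}. g' u) = (\<Sum>u\<in>V - {v}. g u)"
    by (rule sum.cong) (auto simp: g_def g'_def nV fV)
  also have "(\<Sum>u\<in>V - {v}. g u) = (\<Sum>u\<in>V. g u) - g v"
    using sum.remove[OF finV vV, of g] by simp
  also have "(\<Sum>u\<in>V. g u) = fqst_cost Z S nxt f" unfolding fqst_cost_def V_def g_def by simp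
  finally show "fqst_cost Z (insert p S) (nxt(v := p, p := nxt v)) (f(p := f v)) =
         fqst_cost Z S nxt f - f v * (dist v (nxt v))\<^sup>2 + f v * (dist v p)\<^sup>2 + f v * (dist p (nxt v))\<^sup>2"
    unfolding nxt'_def[symmetric] f'_def[symmetric] using pv
    by (simp add: g_def g'_def n1 f1 w_def)
qed


lemma gq_aux:
  fixes a L :: real assumes "a > 0"
  shows "((1 / (a+1)) * L)\<^sup>2 + ((a / (a+1)) * L)\<^sup>2 / a = L\<^sup>2 / (a+1)"
proof -
  define b where "b = a + 1"
  have bz: "b \<noteq> 0" "a \<noteq> 0" using assms b_def by auto
  have "((1 / b) * L)\<^sup>2 + ((a / b) * L)\<^sup>2 / a - L\<^sup>2 / b = L\<^sup>2 * (1 + a - b) / b\<^sup>2"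
    using bz by (simp add: field_simps power2_eq_square)
  also have "\<dots> = 0" by (simp add: b_def)
  finally show ?thesis unfolding b_def[symmetric] by simp
qed

lemma chain:
  assumes "is_fqst Z s S nxt f" "v \<in> Z \<union> S" "\<delta> > 0" "finite Z" "s \<notin> Z"
  shows "\<exists>S' nxt' f'. is_fqst Z s S' nxt' f' \<and> card S' = card S + m \<and>
     (\<forall>u\<in>Z-{v}. nxt' u = nxt u \<and> f' u = f u) \<and>
     fqst_cost Z S' nxt' f' \<le> fqst_cost Z S nxt f - f v * (dist v (nxt v))\<^sup>2
        + f v * (dist v (nxt v))\<^sup>2 / real (m+1) + \<delta>"
  using assms
proof (induction m arbitrary: S nxt f v \<delta>)
  case 0
  then show ?case by (intro exI[of _ S] exI[of _ nxt] exI[of _ f]) simp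
next
  case (Suc m)
  note fq = Suc.prems(1) and vin = Suc.prems(2) and dp = Suc.prems(3)
    and finZ = Suc.prems(4) and sZ = Suc.prems(5)
  define w where "w = nxt v"
  define L where "L = dist v w"
  have fv: "f v > 0" using fq vin unfolding is_fqst_def by auto
  have finS: "finite S" using fq unfolding is_fqst_def by auto
  define t :: real where "t = 1 / real (m+2)"
  have t0: "0 \<le> t" "t \<le> 1" unfolding t_def by auto
  define q where "q = v + t *\<^sub>R (w - v)"
  define g where "g p = (dist v p)\<^sup>2 + (dist p w)\<^sup>2 / real (m+1)" for p
  have "v - q = (-t) *\<^sub>R (w - v)" by (simp add: q_def algebra_simps)
  hence d1: "dist v q = t * L" using t0 unfolding L_def by (simp add: dist_norm norm_minus_commute)
  have "q - w = (1 - t) *\<^sub>R (v - w)" by (simp add: q_def algebra_simps)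
  hence d2: "dist q w = (1 - t) * L" using t0 unfolding L_def by (simp add: dist_norm)
  have omt: "1 - t = real (m+1) / real (m+2)" unfolding t_def by (simp add: field_simps)
  have gq: "g q = L\<^sup>2 / real (m+2)"
  proof -
    have "g q = (t * L)\<^sup>2 + ((1 - t) * L)\<^sup>2 / real (m+1)" unfolding g_def d1 d2 ..
    also have "\<dots> = L\<^sup>2 / real (m+2)"
    proof -
      have ee: "real (m+2) = real (m+1) + 1" by simp
      show ?thesis unfolding omt unfolding t_def ee by (rule gq_aux) simp
    qed
    finally show ?thesis .
  qed
  have "isCont g q" unfolding g_def by (intro continuous_intros) auto
  hence cont: "(g \<longlongrightarrow> g q) (at q)" by (simp add: isCont_def)
  have pos: "g q < g q + \<delta> / (2 * f v)" using dp fv by simp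
  have ev1: "eventually (\<lambda>p. g p < g q + \<delta> / (2 * f v)) (at q)"
    by (rule order_tendstoD(2)[OF cont pos])
  define F where "F = Z \<union> S \<union> {s}"
  have finF: "finite F" unfolding F_def using finZ finS by simp
  have ev2: "eventually (\<lambda>p. p \<notin> F) (at q)"
    using finF by (metis UNIV_I finite_imp_sparse open_UNIV sparse_in_eventually_iff)
  have "\<exists>p. g p < g q + \<delta> / (2 * f v) \<and> p \<notin> F"
    using eventually_happens[OF eventually_conj[OF ev1 ev2]] by simp
  then obtain p where p1: "g p < g q + \<delta> / (2 * f v)" and p2: "p \<notin> Z \<union> S \<union> {s}"
    unfolding F_def by blast
  define S1 where "S1 = insert p S"
  define nxt1 where "nxt1 = nxt(v := p, p := nxt v)"
  define f1 where "f1 = f(p := f v)"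
  have fq1: "is_fqst Z s S1 nxt1 f1"
    unfolding S1_def nxt1_def f1_def by (rule insert_bead(1)[OF fq vin p2 finZ sZ])
  have c1: "fqst_cost Z S1 nxt1 f1 = fqst_cost Z S nxt f - f v * L\<^sup>2 + f v * (dist v p)\<^sup>2 + f v * (dist p w)\<^sup>2"
    unfolding S1_def nxt1_def f1_def L_def w_def by (rule insert_bead(2)[OF fq vin p2 finZ sZ])
  have pin: "p \<in> Z \<union> S1" unfolding S1_def by simp
  have nx1: "nxt1 p = w" "f1 p = f v" unfolding nxt1_def f1_def w_def by simp_all
  have cS1: "card S1 = card S + 1" unfolding S1_def using finS p2 by simp
  have "\<exists>S' nxt' f'. is_fqst Z s S' nxt' f' \<and> card S' = card S1 + m \<and>
     (\<forall>u\<in>Z-{p}. nxt' u = nxt1 u \<and> f' u = f1 u) \<and>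
     fqst_cost Z S' nxt' f' \<le> fqst_cost Z S1 nxt1 f1 - f1 p * (dist p (nxt1 p))\<^sup>2
        + f1 p * (dist p (nxt1 p))\<^sup>2 / real (m+1) + \<delta>/2"
    by (rule Suc.IH) (use fq1 pin dp finZ sZ in auto)
  then obtain S' nxt' f' where fq': "is_fqst Z s S' nxt' f'" and cS': "card S' = card S1 + m"
    and inv': "\<forall>u\<in>Z-{p}. nxt' u = nxt1 u \<and> f' u = f1 u"
    and co': "fqst_cost Z S' nxt' f' \<le> fqst_cost Z S1 nxt1 f1 - f v * (dist p w)\<^sup>2
        + f v * (dist p w)\<^sup>2 / real (m+1) + \<delta>/2"
    unfolding nx1 by blast
  have inv: "\<forall>u\<in>Z-{v}. nxt' u = nxt u \<and> f' u = f u"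
  proof
    fix u assume u: "u \<in> Z - {v}"
    hence "u \<noteq> p" using p2 by auto
    thus "nxt' u = nxt u \<and> f' u = f u" using inv' u unfolding nxt1_def f1_def by auto
  qed
  have gp: "f v * g p = f v * (dist v p)\<^sup>2 + f v * (dist p w)\<^sup>2 / real (m+1)"
    unfolding g_def by (simp add: algebra_simps)
  have "f v * g p < f v * (g q + \<delta> / (2 * f v))" using p1 fv by simp
  also have "\<dots> = f v * g q + \<delta> / 2" using fv by (simp add: field_simps)
  finally have gp2: "f v * g p < f v * g q + \<delta> / 2" .
  have gq2: "f v * g q = f v * L\<^sup>2 / real (m+2)" using gq by simp
  have fin: "fqst_cost Z S' nxt' f' \<le> fqst_cost Z S nxt f - f v * L\<^sup>2 + f v * L\<^sup>2 / real (m+2) + \<delta>"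
    using co' c1 gp gp2 gq2 by linarith
  have e: "real (Suc m + 1) = real (m + 2)" by simp
  show ?case
    apply (rule exI[of _ S'], rule exI[of _ nxt'], rule exI[of _ f'])
    using fq' cS' cS1 inv fin unfolding e L_def w_def by simp
qed

definition bt :: "real \<Rightarrow> (pt \<Rightarrow> real) \<Rightarrow> (pt \<Rightarrow> pt) \<Rightarrow> pt \<Rightarrow> real" where
  "bt c fM nxtM u = (let m = num_beads c (fM u) (dist u (nxtM u)) in
        real (m + 1) * (fM u * (dist u (nxtM u) / real (m + 1))\<^sup>2) + c * real m)"

lemma aux_sq0: fixes r a b :: real assumes "r \<noteq> 0"
  shows "r * (a * (b / r)\<^sup>2) = a * b\<^sup>2 / r"
  using assms by (simp add: power2_eq_square field_simps)

lemma aux_sq: "real (m+1) * (a * (b / real (m+1))\<^sup>2) = a * b\<^sup>2 / real (m+1)"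
  by (rule aux_sq0) simp

lemma build:
  assumes fq0: "is_fqst Z s {} nxtM fM" and finZ: "finite Z" and sZ: "s \<notin> Z" and dp: "\<delta> > 0"
  shows "finite W \<Longrightarrow> W \<subseteq> Z \<Longrightarrow> \<exists>S' nxt' f'. is_fqst Z s S' nxt' f' \<and>
     (\<forall>u\<in>Z-W. nxt' u = nxtM u \<and> f' u = fM u) \<and>
     fqst_costc c Z S' nxt' f' \<le> (\<Sum>u\<in>Z-W. fM u * (dist u (nxtM u))\<^sup>2) + (\<Sum>u\<in>W. bt c fM nxtM u)
        + real (card W) * \<delta>"
proof (induction W rule: finite_induct)
  case empty
  show ?case
    by (rule exI[of _ "{}"], rule exI[of _ nxtM], rule exI[of _ fM])
       (simp add: fq0 fqst_costc_def fqst_cost_def)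
next
  case (insert x W)
  then obtain S1 nxt1 f1 where fq1: "is_fqst Z s S1 nxt1 f1"
    and inv1: "\<forall>u\<in>Z-W. nxt1 u = nxtM u \<and> f1 u = fM u"
    and co1: "fqst_costc c Z S1 nxt1 f1 \<le> (\<Sum>u\<in>Z-W. fM u * (dist u (nxtM u))\<^sup>2) + (\<Sum>u\<in>W. bt c fM nxtM u)
        + real (card W) * \<delta>" by auto
  have xZ: "x \<in> Z" "x \<in> Z - W" using insert by auto
  have e1: "nxt1 x = nxtM x" "f1 x = fM x" using inv1 xZ by auto
  define m where "m = num_beads c (fM x) (dist x (nxtM x))"
  define L where "L = dist x (nxtM x)"
  have "\<exists>S' nxt' f'. is_fqst Z s S' nxt' f' \<and> card S' = card S1 + m \<and>
     (\<forall>u\<in>Z-{x}. nxt' u = nxt1 u \<and> f' u = f1 u) \<and>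
     fqst_cost Z S' nxt' f' \<le> fqst_cost Z S1 nxt1 f1 - f1 x * (dist x (nxt1 x))\<^sup>2
        + f1 x * (dist x (nxt1 x))\<^sup>2 / real (m+1) + \<delta>"
    by (rule chain) (use fq1 xZ dp finZ sZ in auto)
  then obtain S' nxt' f' where fq': "is_fqst Z s S' nxt' f'" and cS': "card S' = card S1 + m"
    and inv': "\<forall>u\<in>Z-{x}. nxt' u = nxt1 u \<and> f' u = f1 u"
    and co': "fqst_cost Z S' nxt' f' \<le> fqst_cost Z S1 nxt1 f1 - fM x * L\<^sup>2
        + fM x * L\<^sup>2 / real (m+1) + \<delta>"
    unfolding e1 L_def by blast
  have inv: "\<forall>u\<in>Z - insert x W. nxt' u = nxtM u \<and> f' u = fM u" using inv' inv1 by auto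
  have s1: "(\<Sum>u\<in>Z-W. fM u * (dist u (nxtM u))\<^sup>2) = fM x * L\<^sup>2 + (\<Sum>u\<in>Z - insert x W. fM u * (dist u (nxtM u))\<^sup>2)"
  proof -
    have "Z - W - {x} = Z - insert x W" by auto
    thus ?thesis using sum.remove[OF _ xZ(2), of "\<lambda>u. fM u * (dist u (nxtM u))\<^sup>2"] finZ
      unfolding L_def by simp
  qed
  have s2: "(\<Sum>u\<in>insert x W. bt c fM nxtM u) = bt c fM nxtM x + (\<Sum>u\<in>W. bt c fM nxtM u)"
    using insert by simp
  have btx: "bt c fM nxtM x = fM x * L\<^sup>2 / real (m+1) + c * real m"
    unfolding bt_def Let_def by (simp only: m_def L_def aux_sq)
  have cw: "real (card (insert x W)) = real (card W) + 1" using insert by simp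
  have cc1: "fqst_costc c Z S1 nxt1 f1 = fqst_cost Z S1 nxt1 f1 + c * real (card S1)"
    by (simp add: fqst_costc_def)
  have cc': "fqst_costc c Z S' nxt' f' = fqst_cost Z S' nxt' f' + c * real (card S1) + c * real m"
    by (simp add: fqst_costc_def cS' algebra_simps)
  have "fqst_costc c Z S' nxt' f' \<le> (\<Sum>u\<in>Z - insert x W. fM u * (dist u (nxtM u))\<^sup>2)
        + (\<Sum>u\<in>insert x W. bt c fM nxtM u) + real (card (insert x W)) * \<delta>"
    unfolding cc' s2 btx cw using co' co1 cc1 s1 by (simp add: distrib_right)
  thus ?case using fq' inv by blast
qed


theorem mainTheorem17:
  fixes Z :: "pt set" and zBS :: pt and c :: real and S :: "pt set"
    and nxt :: "pt \<Rightarrow> pt" and f :: "pt \<Rightarrow> real" and k :: nat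
    and nxtM :: "pt \<Rightarrow> pt" and fM :: "pt \<Rightarrow> real"
  assumes "finite Z" and "Z \<noteq> {}" and "zBS \<notin> Z" and "c > 0"
    and "is_mfqst c Z zBS S nxt f" and "card S = k"
    and "is_emst Z zBS nxtM" and "is_fqst Z zBS {} nxtM fM"
  shows "real k \<le> (1 / c) * (bst_costc c Z nxtM fM
            - (1 / real (card Z + k + 1)) * (\<Sum>z \<in> Z. (dist z zBS)\<^sup>2))"
proof -
  note finZ = assms(1) and sZ = assms(3) and cpos = assms(4)
  from assms(5) have fq: "is_fqst Z zBS S nxt f"
    and mn: "\<forall>S' nxt' f'. is_fqst Z zBS S' nxt' f' \<longrightarrow> fqst_costc c Z S nxt f \<le> fqst_costc c Z S' nxt' f'"
    unfolding is_mfqst_def by auto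
  have finS: "finite S" and disj: "S \<inter> (Z \<union> {zBS}) = {}" using fq unfolding is_fqst_def by auto
  define n where "n = card Z"
  define N where "N = n + k"
  define D where "D = (\<Sum>z \<in> Z. (dist z zBS)\<^sup>2)"
  have n1: "n \<ge> 1" unfolding n_def using finZ assms(2) by (simp add: Suc_le_eq card_gt_0_iff)
  have Npos: "real N > 0" unfolding N_def using n1 by simp
  obtain z0 where z0: "z0 \<in> Z" using assms(2) by blast
  have "z0 \<noteq> zBS" using z0 sZ by auto
  hence "(dist z0 zBS)\<^sup>2 > 0" by simp
  hence Dpos: "D > 0" unfolding D_def by (rule sum_pos2[OF finZ z0]) simp
  have cardZS: "card (Z \<union> S) = N" unfolding N_def n_def using finZ finS disj assms(6)
    by (subst card_Un_disjoint) auto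
  define L where "L = fqst_cost Z S nxt f"
  have "D \<le> real (card (Z \<union> S)) * fqst_cost Z S (nxt(zBS := zBS)) f"
    unfolding D_def by (rule lower[OF fix_sink(1)[OF fq sZ] _ finZ sZ]) simp
  hence "D \<le> real N * L" unfolding cardZS L_def fix_sink(2)[OF fq sZ] .
  hence lowL: "D / real N \<le> L" using Npos by (simp add: pos_divide_le_eq mult.commute)
  define \<epsilon> where "\<epsilon> = D / real N - D / real (N + 1)"
  have epos: "\<epsilon> > 0" unfolding \<epsilon>_def using Dpos Npos by (simp add: frac_less2)
  define \<delta> where "\<delta> = \<epsilon> / real n"
  have dpos: "\<delta> > 0" unfolding \<delta>_def using epos n1 by simp
  have nd: "real n * \<delta> = \<epsilon>" unfolding \<delta>_def using n1 by simp
  obtain S' nxt' f' where fq': "is_fqst Z zBS S' nxt' f'"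
    and co': "fqst_costc c Z S' nxt' f' \<le> (\<Sum>u\<in>Z-Z. fM u * (dist u (nxtM u))\<^sup>2) + (\<Sum>u\<in>Z. bt c fM nxtM u)
        + real (card Z) * \<delta>"
    using build[OF assms(8) finZ sZ dpos, of Z c] finZ by blast
  have bst: "bst_costc c Z nxtM fM = (\<Sum>u\<in>Z. bt c fM nxtM u)"
    unfolding bst_costc_def bt_def by simp
  have co2: "fqst_costc c Z S' nxt' f' \<le> bst_costc c Z nxtM fM + \<epsilon>"
    using co' unfolding bst nd[symmetric] n_def by simp
  have "L + c * real k \<le> fqst_costc c Z S' nxt' f'"
    using mn fq' unfolding fqst_costc_def L_def assms(6) by blast
  hence "c * real k \<le> bst_costc c Z nxtM fM - D / real (N + 1)"
    using co2 lowL unfolding \<epsilon>_def by linarith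
  hence "real k \<le> (bst_costc c Z nxtM fM - D / real (N + 1)) / c"
    using cpos by (simp add: pos_le_divide_eq mult.commute)
  thus ?thesis unfolding D_def N_def n_def by simp
qed

end
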